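(* Let $E=\mathbb{R}^n$, $d\ge1$ an integer, $m\in(0,1)$, $a>0$. Let $\mu,\nu$ be probability measures on $E$ with $\operatorname{supp}\mu$ bounded and $w:=W_2(\mu,\nu)\le \frac14$. Suppose that for every $x\in\operatorname{supp}\mu$ and every $r<(m/a)^{1/d}$, $\mu(B(x,r))\ge a r^d$ ($B$ the open ball). Then $$d_i\big(W[\mu],W[\nu]\big)\le \big(8\,\mathrm{diam}(\operatorname{supp}\mu)+5\big)\Big(\frac{w}{m}\Big)^{1/2}+2a^{-1/d}m^{1/d}.$$
   Context: $W_2$ is the 2-Wasserstein distance on probability measures on $E$. For a probability measure $\alpha$ on $E$, $t\in[0,1)$, $x\in E$: $\delta_{\alpha,t}(x)=\inf\{r\ge0:\alpha(\bar B(x,r))>t\}$ ($\bar B$ closed ball) and the DTM is $d_{\alpha,m}(x)=\big(\frac1m\int_0^m\delta_{\alpha,t}^2(x)dt\big)^{1/2}$. The DTM-filtration $W[\alpha]=(W[\alpha]^t)_{t\ge0}$ is $W[\alpha]^t=\bigcup_{x\in\operatorname{supp}\alpha}\bar B\big(x,t-d_{\alpha,m}(x)\big)$, where $\bar B(x,s)$ is taken to be empty when $s<0$. Two filtrations $V,W$ of $E$ are $\epsilon$-interleaved if $V^t\subseteq W^{t+\epsilon}$ and $W^t\subseteq V^{t+\epsilon}$ for all $t\ge0$; $d_i(V,W)$ is the infimum of such $\epsilon$. *)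

theory Defs
  imports "HOL-Probability.Probability"
begin

definition is_prob_on :: "'a::euclidean_space measure \<Rightarrow> bool" where
  "is_prob_on M \<longleftrightarrow> prob_space M \<and> sets M = sets borel"

definition supp :: "'a::euclidean_space measure \<Rightarrow> 'a set" where
  "supp M = {x. \<forall>r>0. measure M (ball x r) > 0}"

definition couplings :: "'a::euclidean_space measure \<Rightarrow> 'a measure \<Rightarrow> ('a \<times> 'a) measure set" where
  "couplings \<mu> \<nu> = {\<pi>. prob_space \<pi> \<and> sets \<pi> = sets borel \<and>
      distr \<pi> borel fst = \<mu> \<and> distr \<pi> borel snd = \<nu>}"

definition W2_sq :: "'a::euclidean_space measure \<Rightarrow> 'a measure \<Rightarrow> ennreal" where
  "W2_sq \<mu> \<nu> = (INF \<pi>\<in>couplings \<mu> \<nu>. \<integral>\<^sup>+ p. ennreal ((dist (fst p) (snd p))\<^sup>2) \<partial>\<pi>)"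

definition W2 :: "'a::euclidean_space measure \<Rightarrow> 'a measure \<Rightarrow> real" where
  "W2 \<mu> \<nu> = sqrt (enn2real (W2_sq \<mu> \<nu>))"

definition delta_fun :: "'a::euclidean_space measure \<Rightarrow> real \<Rightarrow> 'a \<Rightarrow> real" where
  "delta_fun \<alpha> t x = Inf {r. r \<ge> 0 \<and> measure \<alpha> (cball x r) > t}"

definition dtm :: "'a::euclidean_space measure \<Rightarrow> real \<Rightarrow> 'a \<Rightarrow> real" where
  "dtm \<alpha> m x = sqrt ((1 / m) * integral {0..m} (\<lambda>t. (delta_fun \<alpha> t x)\<^sup>2))"

text \<open>DTM-filtration; cball x s is empty for s < 0.\<close>
definition dtm_filtration :: "'a::euclidean_space measure \<Rightarrow> real \<Rightarrow> real \<Rightarrow> 'a set" where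
  "dtm_filtration \<alpha> m t = (\<Union>x\<in>supp \<alpha>. cball x (t - dtm \<alpha> m x))"

definition interleaved :: "real \<Rightarrow> (real \<Rightarrow> 'a set) \<Rightarrow> (real \<Rightarrow> 'a set) \<Rightarrow> bool" where
  "interleaved \<epsilon> V W \<longleftrightarrow> (\<forall>t\<ge>0. V t \<subseteq> W (t + \<epsilon>) \<and> W t \<subseteq> V (t + \<epsilon>))"

text \<open>Interleaving distance (infimum in the extended reals; +\<infinity> if never interleaved).\<close>
definition interleaving_dist :: "(real \<Rightarrow> 'a set) \<Rightarrow> (real \<Rightarrow> 'a set) \<Rightarrow> ereal" where
  "interleaving_dist V W = Inf {ereal \<epsilon> | \<epsilon>. \<epsilon> \<ge> 0 \<and> interleaved \<epsilon> V W}"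

end

theory Submission
  imports Defs
begin



definition quant :: "(real \<Rightarrow> real) \<Rightarrow> real \<Rightarrow> real" where
  "quant F t = Inf {r. 0 \<le> r \<and> t < F r}"

locale qf =
  fixes F :: "real \<Rightarrow> real" and m r0 :: real
  assumes Fmono: "mono F" and Fnn: "\<And>r. 0 \<le> F r"
    and Frc: "\<And>r. (\<lambda>n. F (r + 1 / Suc n)) \<longlonglongrightarrow> F r"
    and r0: "0 \<le> r0" "m < F r0" and mpos: "0 < m"
begin

lemma ne: "t \<le> m \<Longrightarrow> {r. 0 \<le> r \<and> t < F r} \<noteq> {}"
  using r0 by force

lemma bdd: "bdd_below {r. 0 \<le> r \<and> t < F r}"
  by (rule bdd_belowI[of _ 0]) auto

lemma q_nonneg: "t \<le> m \<Longrightarrow> 0 \<le> quant F t"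
  unfolding quant_def by (rule cInf_greatest[OF ne]) auto

lemma q_le_r0: "t \<le> m \<Longrightarrow> quant F t \<le> r0"
  unfolding quant_def by (rule cInf_lower[OF _ bdd]) (use r0 in auto)

lemma q_mono: "t1 \<le> t2 \<Longrightarrow> t2 \<le> m \<Longrightarrow> quant F t1 \<le> quant F t2"
  unfolding quant_def
  by (rule cInf_superset_mono[OF ne bdd]) auto

lemma q_less: "0 \<le> r \<Longrightarrow> F r < t \<Longrightarrow> t \<le> m \<Longrightarrow> r < quant F t"
proof -
  assume r: "0 \<le> r" "F r < t" "t \<le> m"
  have "eventually (\<lambda>n. F (r + 1 / Suc n) < t) sequentially"
    using Frc[of r] r(2) by (simp add: order_tendsto_iff)
  then obtain n where n: "F (r + 1 / Suc n) < t" by (meson eventually_sequentially order_refl)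
  have "r + 1 / Suc n \<le> quant F t"
    unfolding quant_def
  proof (rule cInf_greatest[OF ne[OF r(3)]])
    fix s assume "s \<in> {r. 0 \<le> r \<and> t < F r}"
    then have "t < F s" by auto
    show "r + 1 / Suc n \<le> s"
    proof (rule ccontr)
      assume "\<not> r + 1 / Suc n \<le> s"
      then have "F s \<le> F (r + 1 / Suc n)" using Fmono by (auto simp: mono_def)
      with n \<open>t < F s\<close> show False by simp
    qed
  qed
  moreover have "0 < 1 / real (Suc n)" by simp
  ultimately show ?thesis by linarith
qed

lemma less_q: "0 \<le> r \<Longrightarrow> r < quant F t \<Longrightarrow> F r \<le> t"
proof (rule ccontr)
  assume "0 \<le> r" "r < quant F t" "\<not> F r \<le> t"
  then have "quant F t \<le> r" unfolding quant_def by (intro cInf_lower[OF _ bdd]) auto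
  with \<open>r < quant F t\<close> show False by simp
qed

definition q' where "q' t = quant F (min t m)"

lemma q'_mono: "mono q'"
  unfolding q'_def mono_def by (auto intro!: q_mono)

lemma q'_meas[measurable]: "q' \<in> borel_measurable borel"
  by (rule borel_measurable_mono[OF q'_mono])

end

lemma sq_layer:
  assumes "0 \<le> (Q::real)"
  shows "(\<integral>\<^sup>+ r. ennreal (indicator {0..<Q} r * (2 * r)) \<partial>lborel) = ennreal (Q\<^sup>2)"
proof -
  have "(\<integral>\<^sup>+ r. ennreal (indicator {0..<Q} r * (2 * r)) \<partial>lborel)
      = (\<integral>\<^sup>+ r. ennreal (indicator {0..Q} r * (2 * r)) \<partial>lborel)"
    by (rule nn_integral_cong_AE) (use AE_lborel_singleton[of Q] in \<open>auto simp: indicator_def\<close>)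
  also have "\<dots> = ennreal (Q\<^sup>2)"
  proof (rule nn_integral_has_integral_lebesgue)
    show "((\<lambda>r. 2 * r) has_integral Q\<^sup>2) {0..Q}"
    proof -
      have d: "\<And>x. ((\<lambda>r. r\<^sup>2) has_real_derivative 2 * x) (at x within {0..Q})"
        by (auto intro!: derivative_eq_intros)
      show ?thesis
        using fundamental_theorem_of_calculus[of 0 Q "\<lambda>r. r\<^sup>2" "\<lambda>r. 2 * r"] assms d
        by (simp add: has_real_derivative_iff_has_vector_derivative[symmetric])
    qed
  qed auto
  finally show ?thesis .
qed


lemma sq_layer':
  assumes "0 \<le> (Q::real)"
  shows "(\<integral>\<^sup>+ r. ennreal (if 0 \<le> r \<and> r < Q then 2 * r else 0) \<partial>lborel) = ennreal (Q\<^sup>2)"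
proof -
  have "\<And>r. ennreal (if 0 \<le> r \<and> r < Q then 2 * r else 0) = ennreal (indicator {0..<Q} r * (2 * r))"
    by (auto simp: indicator_def)
  then show ?thesis using sq_layer[OF assms] by presburger
qed

context qf begin

lemma q'_eq: "t \<le> m \<Longrightarrow> q' t = quant F t"
  by (simp add: q'_def)

lemma emeas_S:
  assumes r: "0 \<le> r"
  shows "emeasure lborel {t. t \<in> {0..m} \<and> r < q' t} = ennreal (max 0 (m - F r))"
proof -
  let ?S = "{t. t \<in> {0..m} \<and> r < q' t}"
  have S1: "{F r<..m} \<subseteq> ?S"
    using q_less[OF r] Fnn[of r] by (auto simp: q'_eq)
  have S2: "?S \<subseteq> {F r..m}"
    using less_q[OF r] by (auto simp: q'_eq)
  have Sm: "?S \<in> sets lborel" by measurable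
  show ?thesis
  proof (cases "F r \<le> m")
    case True
    have "emeasure lborel {F r<..m} \<le> emeasure lborel ?S"
      by (rule emeasure_mono[OF S1 Sm])
    moreover have "emeasure lborel ?S \<le> emeasure lborel {F r..m}"
      by (rule emeasure_mono[OF S2]) simp
    ultimately show ?thesis using True by (simp add: max_def)
  next
    case False
    then have "?S = {}" using S2 by auto
    then have "emeasure lborel ?S = 0" by (simp only: emeasure_empty)
    then show ?thesis using False by (simp only:) (simp add: max_def)
  qed
qed

lemma t_layer:
  "(\<integral>\<^sup>+ t. ennreal (indicator {0..m} t * (q' t)\<^sup>2) \<partial>lborel)
   = (\<integral>\<^sup>+ r. ennreal (indicator {0..} r * (2 * r) * max 0 (m - F r)) \<partial>lborel)"
proof -
  define G where "G t r = ennreal (indicator {0..m} t * (if 0 \<le> r \<and> r < q' t then 2 * r else 0))" for t r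
  have Gm: "(\<lambda>(t, r). G t r) \<in> borel_measurable (lborel \<Otimes>\<^sub>M lborel)"
    unfolding G_def by measurable
  have "(\<integral>\<^sup>+ t. ennreal (indicator {0..m} t * (q' t)\<^sup>2) \<partial>lborel) = (\<integral>\<^sup>+ t. (\<integral>\<^sup>+ r. G t r \<partial>lborel) \<partial>lborel)"
  proof (rule nn_integral_cong)
    fix t :: real
    show "ennreal (indicator {0..m} t * (q' t)\<^sup>2) = (\<integral>\<^sup>+ r. G t r \<partial>lborel)"
    proof (cases "t \<in> {0..m}")
      case True
      then have "0 \<le> q' t" using q_nonneg by (simp add: q'_eq)
      then show ?thesis using True sq_layer'[of "q' t"] by (simp add: G_def)
    qed (simp add: G_def)
  qed
  also have "\<dots> = (\<integral>\<^sup>+ r. (\<integral>\<^sup>+ t. G t r \<partial>lborel) \<partial>lborel)"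
    using lborel_pair.Fubini'[OF Gm] by simp
  also have "\<dots> = (\<integral>\<^sup>+ r. ennreal (indicator {0..} r * (2 * r) * max 0 (m - F r)) \<partial>lborel)"
  proof (rule nn_integral_cong)
    fix r :: real
    show "(\<integral>\<^sup>+ t. G t r \<partial>lborel) = ennreal (indicator {0..} r * (2 * r) * max 0 (m - F r))"
    proof (cases "0 \<le> r")
      case True
      have "(\<integral>\<^sup>+ t. G t r \<partial>lborel) = (\<integral>\<^sup>+ t. ennreal (2 * r) * indicator {t. t \<in> {0..m} \<and> r < q' t} t \<partial>lborel)"
        by (rule nn_integral_cong) (use True in \<open>auto simp: G_def indicator_def\<close>)
      also have "\<dots> = ennreal (2 * r) * emeasure lborel {t. t \<in> {0..m} \<and> r < q' t}"
        by (subst nn_integral_cmult_indicator) (auto)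
      also have "\<dots> = ennreal (indicator {0..} r * (2 * r) * max 0 (m - F r))"
        by (simp only: emeas_S[OF True]) (simp add: ennreal_mult True)
      finally show ?thesis .
    qed (simp add: G_def)
  qed
  finally show ?thesis .
qed

end


context qf begin

definition Psi where
  "Psi = (\<integral>\<^sup>+ r. ennreal (indicator {0..} r * (2 * r) * max 0 (m - F r)) \<partial>lborel)"

lemma Psi_fin: "Psi < \<infinity>"
proof -
  have "Psi = (\<integral>\<^sup>+ t. ennreal (indicator {0..m} t * (q' t)\<^sup>2) \<partial>lborel)"
    unfolding Psi_def by (rule t_layer[symmetric])
  also have "\<dots> \<le> (\<integral>\<^sup>+ t. ennreal (r0\<^sup>2) * indicator {0..m} t \<partial>lborel)"
  proof (rule nn_integral_mono)
    fix t :: real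
    show "ennreal (indicator {0..m} t * (q' t)\<^sup>2) \<le> ennreal (r0\<^sup>2) * indicator {0..m} t"
    proof (cases "t \<in> {0..m}")
      case True
      then have "0 \<le> q' t" "q' t \<le> r0" using q_nonneg q_le_r0 by (auto simp: q'_eq)
      then have "(q' t)\<^sup>2 \<le> r0\<^sup>2" by (simp add: power_mono)
      then show ?thesis using True by (simp add: ennreal_leI)
    qed simp
  qed
  also have "\<dots> = ennreal (r0\<^sup>2) * ennreal m"
    using mpos by (subst nn_integral_cmult_indicator) auto
  also have "\<dots> < \<infinity>" by (simp add: ennreal_mult_less_top)
  finally show ?thesis .
qed

lemma q_has_integral: "((\<lambda>t. (quant F t)\<^sup>2) has_integral enn2real Psi) {0..m}"
proof -
  have "((\<lambda>t. indicator {0..m} t * (q' t)\<^sup>2) has_integral enn2real Psi) UNIV"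
  proof (rule nn_integral_has_integral)
    show "(\<lambda>t. indicator {0..m} t * (q' t)\<^sup>2) \<in> borel_measurable borel" by measurable
    show "(\<integral>\<^sup>+ t. ennreal (indicator {0..m} t * (q' t)\<^sup>2) \<partial>lborel) = ennreal (enn2real Psi)"
      using Psi_fin unfolding t_layer Psi_def by simp
  qed auto
  moreover have "(\<lambda>t. indicator {0..m} t * (q' t)\<^sup>2) = (\<lambda>t. if t \<in> {0..m} then (q' t)\<^sup>2 else 0)"
    by (auto simp: indicator_def)
  ultimately have "((\<lambda>t. (q' t)\<^sup>2) has_integral enn2real Psi) {0..m}"
    by (simp only: has_integral_restrict_UNIV)
  then show ?thesis
    by (rule has_integral_cong[THEN iffD1, rotated]) (simp add: q'_eq)
qed

lemma Phi_eq: "integral {0..m} (\<lambda>t. (quant F t)\<^sup>2) = enn2real Psi"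
  using q_has_integral by (rule integral_unique)

end


lemma (in prob_space) meas_layer:
  assumes hm[measurable]: "h \<in> borel_measurable M" and hnn: "\<And>p. 0 \<le> h p"
    and Rm[measurable]: "R \<in> borel_measurable M" and Rnn: "\<And>p. 0 \<le> R p"
  shows "(\<integral>\<^sup>+ p. ennreal (h p * (R p)\<^sup>2) \<partial>M)
    = (\<integral>\<^sup>+ r. ennreal (indicator {0..} r * (2 * r)) * (\<integral>\<^sup>+ p. ennreal (if r < R p then h p else 0) \<partial>M) \<partial>lborel)"
proof -
  interpret pair_sigma_finite M lborel ..
  define G where "G p r = ennreal (h p * (if 0 \<le> r \<and> r < R p then 2 * r else 0))" for p r
  have Gm: "(\<lambda>(p, r). G p r) \<in> borel_measurable (M \<Otimes>\<^sub>M lborel)"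
    unfolding G_def by measurable
  have "(\<integral>\<^sup>+ p. ennreal (h p * (R p)\<^sup>2) \<partial>M) = (\<integral>\<^sup>+ p. (\<integral>\<^sup>+ r. G p r \<partial>lborel) \<partial>M)"
  proof (rule nn_integral_cong)
    fix p
    have "(\<integral>\<^sup>+ r. G p r \<partial>lborel) = (\<integral>\<^sup>+ r. ennreal (h p) * ennreal (if 0 \<le> r \<and> r < R p then 2 * r else 0) \<partial>lborel)"
      unfolding G_def by (rule nn_integral_cong) (simp add: ennreal_mult hnn)
    also have "\<dots> = ennreal (h p) * ennreal ((R p)\<^sup>2)"
      by (subst nn_integral_cmult) (simp_all add: sq_layer' Rnn)
    finally show "ennreal (h p * (R p)\<^sup>2) = (\<integral>\<^sup>+ r. G p r \<partial>lborel)"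
      by (simp add: ennreal_mult hnn)
  qed
  also have "\<dots> = (\<integral>\<^sup>+ r. (\<integral>\<^sup>+ p. G p r \<partial>M) \<partial>lborel)"
    using Fubini'[OF Gm] by simp
  also have "\<dots> = (\<integral>\<^sup>+ r. ennreal (indicator {0..} r * (2 * r)) * (\<integral>\<^sup>+ p. ennreal (if r < R p then h p else 0) \<partial>M) \<partial>lborel)"
  proof (rule nn_integral_cong)
    fix r :: real
    show "(\<integral>\<^sup>+ p. G p r \<partial>M) = ennreal (indicator {0..} r * (2 * r)) * (\<integral>\<^sup>+ p. ennreal (if r < R p then h p else 0) \<partial>M)"
    proof (cases "0 \<le> r")
      case True
      have "(\<integral>\<^sup>+ p. G p r \<partial>M) = (\<integral>\<^sup>+ p. ennreal (2 * r) * ennreal (if r < R p then h p else 0) \<partial>M)"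
        unfolding G_def by (rule nn_integral_cong) (use True hnn in \<open>auto simp: ennreal_mult' mult.commute\<close>)
      also have "\<dots> = ennreal (2 * r) * (\<integral>\<^sup>+ p. ennreal (if r < R p then h p else 0) \<partial>M)"
        by (subst nn_integral_cmult) auto
      finally show ?thesis using True by simp
    qed (simp add: G_def)
  qed
  finally show ?thesis .
qed




definition distF :: "'b measure \<Rightarrow> ('b \<Rightarrow> real) \<Rightarrow> real \<Rightarrow> real" where
  "distF M R r = measure M {p \<in> space M. R p \<le> r}"

definition Phi :: "'b measure \<Rightarrow> ('b \<Rightarrow> real) \<Rightarrow> real \<Rightarrow> real" where
  "Phi M R m = integral {0..m} (\<lambda>t. (quant (distF M R) t)\<^sup>2)"

lemma (in prob_space) qf_distF:
  assumes Rm[measurable]: "R \<in> borel_measurable M" and m: "0 < m" "m < 1"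
  shows "\<exists>r0. qf (distF M R) m r0"
proof -
  have mono: "mono (distF M R)"
    unfolding distF_def mono_def by (intro allI impI finite_measure_mono) auto
  have rc: "(\<lambda>n. distF M R (r + 1 / Suc n)) \<longlonglongrightarrow> distF M R r" for r
  proof -
    define A where "A n = {p \<in> space M. R p \<le> r + 1 / Suc n}" for n
    have "(\<lambda>n. measure M (A n)) \<longlonglongrightarrow> measure M (\<Inter>n. A n)"
    proof (rule finite_Lim_measure_decseq)
      show "range A \<subseteq> sets M" unfolding A_def by auto
      show "decseq A"
      proof (rule decseq_SucI)
        fix n
        have h: "1 / real (Suc (Suc n)) \<le> 1 / real (Suc n)" by (rule frac_le) auto
        show "A (Suc n) \<subseteq> A n"
        proof
          fix p assume "p \<in> A (Suc n)"
          then have "p \<in> space M" "R p \<le> r + 1 / real (Suc (Suc n))" unfolding A_def by auto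
          moreover have "R p \<le> r + 1 / real (Suc n)" using h calculation(2) by linarith
          ultimately show "p \<in> A n" unfolding A_def by auto
        qed
      qed
    qed
    moreover have "(\<Inter>n. A n) = {p \<in> space M. R p \<le> r}"
    proof (rule equalityI)
      show "(\<Inter>n. A n) \<subseteq> {p \<in> space M. R p \<le> r}"
      proof
        fix p assume p: "p \<in> (\<Inter>n. A n)"
        have "R p \<le> r"
        proof (rule ccontr)
          assume "\<not> R p \<le> r"
          then have "0 < R p - r" by simp
          from reals_Archimedean[OF this] obtain n where n: "inverse (real (Suc n)) < R p - r" ..
          have "p \<in> A n" using p by blast
          then have "R p \<le> r + 1 / real (Suc n)" unfolding A_def by blast
          with n show False by (simp add: inverse_eq_divide)
        qed
        moreover have "p \<in> space M" using p unfolding A_def by blast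
        ultimately show "p \<in> {p \<in> space M. R p \<le> r}" by blast
      qed
      show "{p \<in> space M. R p \<le> r} \<subseteq> (\<Inter>n. A n)"
      proof
        fix p assume p: "p \<in> {p \<in> space M. R p \<le> r}"
        show "p \<in> (\<Inter>n. A n)"
        proof
          fix n :: nat
          have "0 \<le> 1 / real (Suc n)" by simp
          moreover have "R p \<le> r" using p by blast
          ultimately have "R p \<le> r + 1 / real (Suc n)" by linarith
          then show "p \<in> A n" using p unfolding A_def by blast
        qed
      qed
    qed
    ultimately show ?thesis unfolding distF_def A_def by simp
  qed
  have "(\<lambda>n. measure M {p \<in> space M. R p \<le> real n}) \<longlonglongrightarrow> measure M (\<Union>n. {p \<in> space M. R p \<le> real n})"
  proof (rule finite_Lim_measure_incseq)
    show "incseq (\<lambda>n. {p \<in> space M. R p \<le> real n})"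
      by (rule incseq_SucI) auto
  qed auto
  moreover have "(\<Union>n. {p \<in> space M. R p \<le> real n}) = space M"
    using real_arch_simple by fastforce
  ultimately have "(\<lambda>n. distF M R (real n)) \<longlonglongrightarrow> 1"
    unfolding distF_def by (simp add: prob_space)
  then have "eventually (\<lambda>n. m < distF M R (real n)) sequentially"
    using m by (simp add: order_tendsto_iff)
  then obtain n where "m < distF M R (real n)" by (meson eventually_sequentially order_refl)
  then have "qf (distF M R) m (real n)"
    using mono rc m by (intro qf.intro) (auto simp: distF_def)
  then show ?thesis by blast
qed


lemma (in prob_space) rr_facts:
  assumes Rm[measurable]: "R \<in> borel_measurable M" and Rnn: "\<And>p. 0 \<le> R p"
    and Q: "qf (distF M R) m r0"
  shows "m \<le> distF M R (quant (distF M R) m)"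
    and "measure M {p \<in> space M. R p < quant (distF M R) m} \<le> m"
proof -
  interpret qf "distF M R" m r0 by (rule Q)
  let ?F = "distF M R" and ?rr = "quant (distF M R) m"
  have "\<forall>n. m \<le> ?F (?rr + 1 / Suc n)"
  proof
    fix n :: nat
    have "Inf {r. 0 \<le> r \<and> m < ?F r} < ?rr + 1 / Suc n" unfolding quant_def by simp
    then obtain s where s: "s \<in> {r. 0 \<le> r \<and> m < ?F r}" "s < ?rr + 1 / Suc n"
      using cInf_less_iff[OF ne[OF order_refl] bdd] by blast
    then have "?F s \<le> ?F (?rr + 1 / Suc n)" using Fmono by (auto simp: mono_def)
    with s show "m \<le> ?F (?rr + 1 / Suc n)" by auto
  qed
  then show "m \<le> ?F ?rr"
    using Frc[of ?rr] by (intro LIMSEQ_le_const[where X="\<lambda>n. ?F (?rr + 1 / Suc n)"]) auto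
  define A where "A n = {p \<in> space M. R p \<le> ?rr - 1 / Suc n}" for n
  have "(\<lambda>n. measure M (A n)) \<longlonglongrightarrow> measure M (\<Union>n. A n)"
  proof (rule finite_Lim_measure_incseq)
    show "range A \<subseteq> sets M" unfolding A_def by auto
    show "incseq A"
    proof (rule incseq_SucI)
      fix n
      have h: "1 / real (Suc (Suc n)) \<le> 1 / real (Suc n)" by (rule frac_le) auto
      show "A n \<subseteq> A (Suc n)"
      proof
        fix p assume "p \<in> A n"
        then have "p \<in> space M" "R p \<le> ?rr - 1 / real (Suc n)" unfolding A_def by auto
        moreover have "R p \<le> ?rr - 1 / real (Suc (Suc n))" using h calculation(2) by linarith
        ultimately show "p \<in> A (Suc n)" unfolding A_def by auto
      qed
    qed
  qed
  moreover have "(\<Union>n. A n) = {p \<in> space M. R p < ?rr}"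
  proof (rule equalityI)
    show "(\<Union>n. A n) \<subseteq> {p \<in> space M. R p < ?rr}"
    proof
      fix p assume "p \<in> (\<Union>n. A n)"
      then obtain n where "p \<in> A n" by blast
      then have "p \<in> space M" "R p \<le> ?rr - 1 / real (Suc n)" unfolding A_def by auto
      moreover have "0 < 1 / real (Suc n)" by simp
      ultimately have "R p < ?rr" by linarith
      with \<open>p \<in> space M\<close> show "p \<in> {p \<in> space M. R p < ?rr}" by blast
    qed
    show "{p \<in> space M. R p < ?rr} \<subseteq> (\<Union>n. A n)"
    proof
      fix p assume p: "p \<in> {p \<in> space M. R p < ?rr}"
      then have "0 < ?rr - R p" by simp
      from reals_Archimedean[OF this] obtain n where n: "inverse (real (Suc n)) < ?rr - R p" ..
      then have "R p \<le> ?rr - 1 / real (Suc n)" by (simp add: inverse_eq_divide)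
      then have "p \<in> A n" using p unfolding A_def by blast
      then show "p \<in> (\<Union>n. A n)" by blast
    qed
  qed
  moreover have "\<forall>n. measure M (A n) \<le> m"
  proof
    fix n
    show "measure M (A n) \<le> m"
    proof (cases "0 \<le> ?rr - 1 / Suc n")
      case True
      have "?rr - 1 / Suc n < ?rr" by simp
      from less_q[OF True this] show ?thesis unfolding A_def distF_def .
    next
      case False
      have "A n = {}"
      proof (rule ccontr)
        assume "A n \<noteq> {}"
        then obtain p where "R p \<le> ?rr - 1 / Suc n" unfolding A_def by blast
        with Rnn[of p] False show False by linarith
      qed
      then show ?thesis using mpos by simp
    qed
  qed
  ultimately show "measure M {p \<in> space M. R p < ?rr} \<le> m"
    by (metis (no_types, lifting) LIMSEQ_le_const2)
qed


lemma (in prob_space) int_ind2: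
  assumes "A \<in> sets M" "B \<in> sets M"
  shows "integral\<^sup>L M (\<lambda>p. indicator A p + c * indicator B p) = measure M A + c * measure M B"
proof -
  have iA: "integrable M (indicator A :: _ \<Rightarrow> real)" using assms by (intro integrable_real_indicator) (auto simp: less_top[symmetric])
  have iB: "integrable M (indicator B :: _ \<Rightarrow> real)" using assms by (intro integrable_real_indicator) (auto simp: less_top[symmetric])
  have "integral\<^sup>L M (\<lambda>p. indicator A p + c * indicator B p) = integral\<^sup>L M (indicator A) + integral\<^sup>L M (\<lambda>p. c * indicator B p)"
    using iA iB by (intro Bochner_Integration.integral_add) auto
  also have "\<dots> = measure M A + c * measure M B"
    using assms by (simp add: sets.Int_space_eq2)
  finally show ?thesis .
qed

lemma (in prob_space) opt_h:
  assumes Rm[measurable]: "R \<in> borel_measurable M" and Rnn: "\<And>p. 0 \<le> R p"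
    and Q: "qf (distF M R) m r0"
  obtains h where "h \<in> borel_measurable M" "\<And>p. 0 \<le> h p" "\<And>p. h p \<le> 1" "integral\<^sup>L M h = m"
    "\<And>r. 0 \<le> r \<Longrightarrow> integral\<^sup>L M (\<lambda>p. if r < R p then h p else 0) = max 0 (m - distF M R r)"
proof -
  interpret qf "distF M R" m r0 by (rule Q)
  define rr where "rr = quant (distF M R) m"
  define A where "A = {p \<in> space M. R p < rr}"
  define B where "B = {p \<in> space M. R p = rr}"
  define a where "a = measure M A"
  define b where "b = measure M B"
  define \<theta> where "\<theta> = (if b = 0 then 0 else (m - a) / b)"
  define h where "h p = indicator A p + \<theta> * indicator B p" for p
  have [measurable]: "A \<in> sets M" "B \<in> sets M" unfolding A_def B_def by auto
  have ma: "a \<le> m" using rr_facts(2)[OF Rm Rnn Q] unfolding a_def A_def rr_def .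
  have "distF M R rr = measure M (A \<union> B)"
    unfolding distF_def A_def B_def by (rule arg_cong[where f="measure M"]) auto
  also have "\<dots> = a + b" unfolding a_def b_def by (rule finite_measure_Union) (auto simp: A_def B_def)
  finally have Frr: "distF M R rr = a + b" .
  have mb: "m \<le> a + b" using rr_facts(1)[OF Rm Rnn Q] Frr unfolding rr_def by simp
  have b0: "0 \<le> b" unfolding b_def by simp
  have th: "0 \<le> \<theta>" "\<theta> \<le> 1" "a + \<theta> * b = m"
    using ma mb b0 by (auto simp: \<theta>_def field_simps)
  have AB: "A \<inter> B = {}" unfolding A_def B_def by auto
  show ?thesis
  proof
    show "h \<in> borel_measurable M" unfolding h_def by measurable
    show "0 \<le> h p" for p unfolding h_def using th by (simp add: indicator_def)
    show "h p \<le> 1" for p unfolding h_def using th AB by (auto simp: indicator_def)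
    show "integral\<^sup>L M h = m" unfolding h_def using th by (simp add: int_ind2 a_def b_def)
  next
    fix r :: real assume r: "0 \<le> r"
    have eq: "(\<lambda>p. if r < R p then h p else 0) = (\<lambda>p. indicator (A \<inter> {p. r < R p}) p + \<theta> * indicator (B \<inter> {p. r < R p}) p)"
      by (auto simp: h_def indicator_def)
    show "integral\<^sup>L M (\<lambda>p. if r < R p then h p else 0) = max 0 (m - distF M R r)"
    proof (cases "r < rr")
      case True
      have "B \<inter> {p. r < R p} = B" using True unfolding B_def by auto
      moreover have "A \<inter> {p. r < R p} = A - {p \<in> space M. R p \<le> r}" unfolding A_def by auto
      moreover have "measure M (A - {p \<in> space M. R p \<le> r}) = a - distF M R r"
        unfolding a_def distF_def by (rule finite_measure_Diff) (use True in \<open>auto simp: A_def\<close>)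
      moreover have "distF M R r \<le> m" using less_q[OF r True[unfolded rr_def]] .
      moreover have "A - {p \<in> space M. R p \<le> r} \<in> sets M" by measurable
      ultimately show ?thesis unfolding eq using th
        by (simp add: int_ind2 b_def)
    next
      case False
      have "A \<inter> {p. r < R p} = {}" "B \<inter> {p. r < R p} = {}" using False unfolding A_def B_def by auto
      moreover have "distF M R rr \<le> distF M R r" using False Fmono by (auto simp: mono_def)
      ultimately show ?thesis unfolding eq using Frr mb by simp
    qed
  qed
qed




lemma real_mink_aux:
  fixes Z A B :: real
  assumes A: "0 \<le> A" and B: "0 \<le> B" and H: "\<And>l. 0 < l \<Longrightarrow> Z \<le> (1 + l) * A + (1 + 1 / l) * B"
  shows "Z \<le> (sqrt A + sqrt B)\<^sup>2"
proof -
  have sq: "(sqrt A + sqrt B)\<^sup>2 = A + B + 2 * sqrt A * sqrt B"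
    using A B by (simp add: power2_eq_square algebra_simps)
  show ?thesis
  proof (cases "A = 0 \<or> B = 0")
    case False
    then have Ap: "0 < A" and Bp: "0 < B" using A B by auto
    define l where "l = sqrt B / sqrt A"
    have lp: "0 < l" unfolding l_def using Ap Bp by simp
    have "(1 + l) * A = A + sqrt A * sqrt B"
      unfolding l_def using Ap by (simp add: field_simps)
    moreover have "(1 + 1 / l) * B = B + sqrt A * sqrt B"
      unfolding l_def using Ap Bp by (simp add: field_simps)
    ultimately show ?thesis using H[OF lp] sq by linarith
  next
    case True
    show ?thesis
    proof (rule field_le_epsilon)
      fix e :: real assume e: "0 < e"
      show "Z \<le> (sqrt A + sqrt B)\<^sup>2 + e"
      proof (cases "A = 0")
        case A0: True
        have "Z \<le> (1 + (B + 1) / e) * A + (1 + 1 / ((B + 1) / e)) * B"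
          using H[of "(B + 1) / e"] e B by simp
        also have "\<dots> = B + e * B / (B + 1)" using A0 B by (simp add: field_simps)
        also have "\<dots> \<le> B + e" using e B by (simp add: field_simps)
        finally show ?thesis using sq A0 by simp
      next
        case A0: False
        then have B0: "B = 0" using True by simp
        have "Z \<le> (1 + e / (A + 1)) * A + (1 + 1 / (e / (A + 1))) * B"
          using H[of "e / (A + 1)"] e A by simp
        also have "\<dots> = A + e * A / (A + 1)" using B0 A by (simp add: field_simps)
        also have "\<dots> \<le> A + e" using e A by (simp add: field_simps)
        finally show ?thesis using sq B0 by simp
      qed
    qed
  qed
qed

lemma ptw_ineq:
  fixes x y l :: real
  assumes "0 < l"
  shows "(x + y)\<^sup>2 \<le> (1 + l) * x\<^sup>2 + (1 + 1 / l) * y\<^sup>2"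
proof -
  have "0 \<le> (l * x - y)\<^sup>2 / l" using assms by simp
  also have "(l * x - y)\<^sup>2 / l = l * x\<^sup>2 - 2 * x * y + y\<^sup>2 / l"
    using assms by (simp add: field_simps power2_eq_square)
  finally show ?thesis by (simp add: field_simps power2_eq_square algebra_simps)
qed

lemma mink:
  fixes h X Y :: "'b \<Rightarrow> real"
  assumes [measurable]: "h \<in> borel_measurable M" "X \<in> borel_measurable M" "Y \<in> borel_measurable M"
    and hnn: "\<And>p. 0 \<le> h p"
    and iX: "integrable M (\<lambda>p. h p * (X p)\<^sup>2)" and iY: "integrable M (\<lambda>p. h p * (Y p)\<^sup>2)"
  shows "integrable M (\<lambda>p. h p * (X p + Y p)\<^sup>2)"
    and "integral\<^sup>L M (\<lambda>p. h p * (X p + Y p)\<^sup>2)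
         \<le> (sqrt (integral\<^sup>L M (\<lambda>p. h p * (X p)\<^sup>2)) + sqrt (integral\<^sup>L M (\<lambda>p. h p * (Y p)\<^sup>2)))\<^sup>2"
proof -
  have pt: "h p * (X p + Y p)\<^sup>2 \<le> (1 + l) * (h p * (X p)\<^sup>2) + (1 + 1 / l) * (h p * (Y p)\<^sup>2)" if "0 < l" for p l
    using mult_left_mono[OF ptw_ineq[OF that, of "X p" "Y p"] hnn[of p]] by (simp add: algebra_simps)
  show int: "integrable M (\<lambda>p. h p * (X p + Y p)\<^sup>2)"
  proof (rule Bochner_Integration.integrable_bound[of M "\<lambda>p. (1 + 1) * (h p * (X p)\<^sup>2) + (1 + 1 / 1) * (h p * (Y p)\<^sup>2)"])
    show "integrable M (\<lambda>p. (1 + 1) * (h p * (X p)\<^sup>2) + (1 + 1 / 1) * (h p * (Y p)\<^sup>2))"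
      using iX iY by auto
    show "AE p in M. norm (h p * (X p + Y p)\<^sup>2) \<le> norm ((1 + 1) * (h p * (X p)\<^sup>2) + (1 + 1 / 1) * (h p * (Y p)\<^sup>2))"
      using pt[of 1] hnn by (auto intro!: AE_I2 simp del: divide_self_if one_add_one)
  qed simp
  show "integral\<^sup>L M (\<lambda>p. h p * (X p + Y p)\<^sup>2)
         \<le> (sqrt (integral\<^sup>L M (\<lambda>p. h p * (X p)\<^sup>2)) + sqrt (integral\<^sup>L M (\<lambda>p. h p * (Y p)\<^sup>2)))\<^sup>2"
  proof (rule real_mink_aux)
    show "0 \<le> integral\<^sup>L M (\<lambda>p. h p * (X p)\<^sup>2)" using hnn by (intro integral_nonneg_AE) auto
    show "0 \<le> integral\<^sup>L M (\<lambda>p. h p * (Y p)\<^sup>2)" using hnn by (intro integral_nonneg_AE) auto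
    fix l :: real assume l: "0 < l"
    have "integral\<^sup>L M (\<lambda>p. h p * (X p + Y p)\<^sup>2)
      \<le> integral\<^sup>L M (\<lambda>p. (1 + l) * (h p * (X p)\<^sup>2) + (1 + 1 / l) * (h p * (Y p)\<^sup>2))"
      using iX iY int pt[OF l] by (intro integral_mono) auto
    also have "\<dots> = (1 + l) * integral\<^sup>L M (\<lambda>p. h p * (X p)\<^sup>2) + (1 + 1 / l) * integral\<^sup>L M (\<lambda>p. h p * (Y p)\<^sup>2)"
      using iX iY by simp
    finally show "integral\<^sup>L M (\<lambda>p. h p * (X p + Y p)\<^sup>2)
      \<le> (1 + l) * integral\<^sup>L M (\<lambda>p. h p * (X p)\<^sup>2) + (1 + 1 / l) * integral\<^sup>L M (\<lambda>p. h p * (Y p)\<^sup>2)" .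
  qed
qed




lemma (in prob_space) int_if:
  fixes S h :: "_ \<Rightarrow> real"
  assumes [measurable]: "h \<in> borel_measurable M" "S \<in> borel_measurable M"
    and h0: "\<And>p. 0 \<le> h p" and h1: "\<And>p. h p \<le> 1"
  shows "integrable M (\<lambda>p. if r < S p then h p else 0)"
    and "(\<integral>\<^sup>+ p. ennreal (if r < S p then h p else 0) \<partial>M) = ennreal (integral\<^sup>L M (\<lambda>p. if r < S p then h p else 0))"
proof -
  have "Measurable.pred M (\<lambda>p. r < S p)" by measurable
  then have "(\<lambda>p. if r < S p then h p else 0) \<in> borel_measurable M" by measurable
  then show i: "integrable M (\<lambda>p. if r < S p then h p else 0)"
  proof (rule integrable_const_bound[where B=1, rotated])
    show "AE p in M. norm (if r < S p then h p else 0) \<le> 1" using h0 h1 by (auto intro!: AE_I2)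
  qed
  show "(\<integral>\<^sup>+ p. ennreal (if r < S p then h p else 0) \<partial>M) = ennreal (integral\<^sup>L M (\<lambda>p. if r < S p then h p else 0))"
    by (rule nn_integral_eq_integral[OF i]) (use h0 in auto)
qed

lemma (in prob_space) bathtub:
  fixes S h :: "_ \<Rightarrow> real"
  assumes [measurable]: "h \<in> borel_measurable M" "S \<in> borel_measurable M"
    and h0: "\<And>p. 0 \<le> h p" and h1: "\<And>p. h p \<le> 1" and hint: "integral\<^sup>L M h = m"
  shows "max 0 (m - distF M S r) \<le> integral\<^sup>L M (\<lambda>p. if r < S p then h p else 0)"
proof -
  have i1: "integrable M (\<lambda>p. if r < S p then h p else 0)" using int_if(1)[OF assms(1,2) h0 h1] .
  have i2: "integrable M (\<lambda>p. if S p \<le> r then h p else 0)"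
  proof (rule integrable_const_bound[where B=1])
    show "AE p in M. norm (if S p \<le> r then h p else 0) \<le> 1" using h0 h1 by (auto intro!: AE_I2)
  qed measurable
  have "integral\<^sup>L M h = integral\<^sup>L M (\<lambda>p. (if r < S p then h p else 0) + (if S p \<le> r then h p else 0))"
    by (rule Bochner_Integration.integral_cong) auto
  also have "\<dots> = integral\<^sup>L M (\<lambda>p. if r < S p then h p else 0) + integral\<^sup>L M (\<lambda>p. if S p \<le> r then h p else 0)"
    using i1 i2 by (rule Bochner_Integration.integral_add)
  finally have eq: "integral\<^sup>L M h = integral\<^sup>L M (\<lambda>p. if r < S p then h p else 0) + integral\<^sup>L M (\<lambda>p. if S p \<le> r then h p else 0)" .
  have "integral\<^sup>L M (\<lambda>p. if S p \<le> r then h p else 0) \<le> integral\<^sup>L M (indicator {p \<in> space M. S p \<le> r})"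
    using i2 h1 h0 by (intro integral_mono) (auto simp: indicator_def less_top[symmetric])
  also have "\<dots> = distF M S r" unfolding distF_def by (simp add: sets.Int_space_eq2)
  finally have le: "integral\<^sup>L M (\<lambda>p. if S p \<le> r then h p else 0) \<le> distF M S r" .
  have "0 \<le> integral\<^sup>L M (\<lambda>p. if r < S p then h p else 0)" using h0 by (intro integral_nonneg_AE) auto
  then show ?thesis using eq le hint by simp
qed


lemma (in prob_space) core:
  fixes R :: "_ \<Rightarrow> real"
  assumes Rm[measurable]: "R \<in> borel_measurable M" and Rnn: "\<And>p. 0 \<le> R p" and m: "0 < m" "m < 1"
  obtains h where "h \<in> borel_measurable M" "\<And>p. 0 \<le> h p" "\<And>p. h p \<le> 1" "integral\<^sup>L M h = m"
    "\<And>S. S \<in> borel_measurable M \<Longrightarrow> (\<And>p. 0 \<le> S p) \<Longrightarrow> integrable M (\<lambda>p. (S p - R p)\<^sup>2) \<Longrightarrow>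
       sqrt (Phi M S m) \<le> sqrt (Phi M R m) + sqrt (integral\<^sup>L M (\<lambda>p. h p * (S p - R p)\<^sup>2))"
proof -
  obtain r0 where QR: "qf (distF M R) m r0" using qf_distF[OF Rm m] by blast
  obtain h where hm[measurable]: "h \<in> borel_measurable M" and h0: "\<And>p. 0 \<le> h p" and h1: "\<And>p. h p \<le> 1"
    and hint: "integral\<^sup>L M h = m"
    and hr: "\<And>r. 0 \<le> r \<Longrightarrow> integral\<^sup>L M (\<lambda>p. if r < R p then h p else 0) = max 0 (m - distF M R r)"
    using opt_h[OF Rm Rnn QR] by blast
  let ?PsiR = "qf.Psi (distF M R) m"
  have nnR: "(\<integral>\<^sup>+ p. ennreal (h p * (R p)\<^sup>2) \<partial>M) = ?PsiR"
    unfolding meas_layer[OF hm h0 Rm Rnn] qf.Psi_def[OF QR]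
  proof (rule nn_integral_cong)
    fix r :: real
    show "ennreal (indicator {0..} r * (2 * r)) * (\<integral>\<^sup>+ p. ennreal (if r < R p then h p else 0) \<partial>M)
      = ennreal (indicator {0..} r * (2 * r) * max 0 (m - distF M R r))"
    proof (cases "0 \<le> r")
      case True
      show ?thesis unfolding int_if(2)[OF hm Rm h0 h1] hr[OF True] using True
        by (simp add: ennreal_mult)
    qed simp
  qed
  have PsiR_fin: "?PsiR < \<infinity>" using qf.Psi_fin[OF QR] .
  have PhiR: "Phi M R m = enn2real ?PsiR" unfolding Phi_def using qf.Phi_eq[OF QR] .
  have PsiR_eq: "?PsiR = ennreal (Phi M R m)" using PsiR_fin PhiR by simp
  have iR: "integrable M (\<lambda>p. h p * (R p)\<^sup>2)"
    by (rule integrableI_nn_integral_finite[where x="Phi M R m"]) (use h0 nnR PsiR_eq in auto)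
  have "ennreal (integral\<^sup>L M (\<lambda>p. h p * (R p)\<^sup>2)) = ennreal (Phi M R m)"
    using nn_integral_eq_integral[OF iR] h0 nnR PsiR_eq by simp
  then have AR: "integral\<^sup>L M (\<lambda>p. h p * (R p)\<^sup>2) = Phi M R m"
    using h0 PhiR by (subst (asm) ennreal_inj) (auto intro!: integral_nonneg_AE)
  show ?thesis
  proof (rule that[OF hm h0 h1 hint])
    fix S :: "_ \<Rightarrow> real" assume Sm[measurable]: "S \<in> borel_measurable M" and Snn: "\<And>p. 0 \<le> S p"
      and iD: "integrable M (\<lambda>p. (S p - R p)\<^sup>2)"
    obtain r1 where QS: "qf (distF M S) m r1" using qf_distF[OF Sm m] by blast
    let ?PsiS = "qf.Psi (distF M S) m"
    have PsiS_le: "?PsiS \<le> (\<integral>\<^sup>+ p. ennreal (h p * (S p)\<^sup>2) \<partial>M)"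
      unfolding meas_layer[OF hm h0 Sm Snn] qf.Psi_def[OF QS]
    proof (rule nn_integral_mono)
      fix r :: real
      show "ennreal (indicator {0..} r * (2 * r) * max 0 (m - distF M S r))
        \<le> ennreal (indicator {0..} r * (2 * r)) * (\<integral>\<^sup>+ p. ennreal (if r < S p then h p else 0) \<partial>M)"
      proof (cases "0 \<le> r")
        case True
        have "ennreal (indicator {0..} r * (2 * r) * max 0 (m - distF M S r))
          = ennreal (indicator {0..} r * (2 * r)) * ennreal (max 0 (m - distF M S r))"
          using True by (simp add: ennreal_mult)
        also have "\<dots> \<le> ennreal (indicator {0..} r * (2 * r)) * ennreal (integral\<^sup>L M (\<lambda>p. if r < S p then h p else 0))"
          by (intro mult_left_mono ennreal_leI bathtub[OF hm Sm h0 h1 hint]) auto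
        finally show ?thesis unfolding int_if(2)[OF hm Sm h0 h1] .
      qed simp
    qed
    define Y where "Y p = \<bar>S p - R p\<bar>" for p
    have [measurable]: "Y \<in> borel_measurable M" unfolding Y_def by measurable
    have iY: "integrable M (\<lambda>p. h p * (Y p)\<^sup>2)"
    proof (rule Bochner_Integration.integrable_bound[OF iD])
      show "AE p in M. norm (h p * (Y p)\<^sup>2) \<le> norm ((S p - R p)\<^sup>2)"
        using h0 h1 by (auto intro!: AE_I2 simp: Y_def mult_left_le_one_le)
    qed measurable
    note mk = mink[OF hm Rm _ h0 iR iY]
    have pt: "h p * (S p)\<^sup>2 \<le> h p * (R p + Y p)\<^sup>2" for p
    proof -
      have "S p \<le> R p + Y p" unfolding Y_def by simp
      then have "(S p)\<^sup>2 \<le> (R p + Y p)\<^sup>2" using Snn[of p] by (intro power_mono) auto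
      then show ?thesis using h0[of p] by (rule mult_left_mono)
    qed
    have iS: "integrable M (\<lambda>p. h p * (S p)\<^sup>2)"
    proof (rule Bochner_Integration.integrable_bound[OF mk(1)])
      show "AE p in M. norm (h p * (S p)\<^sup>2) \<le> norm (h p * (R p + Y p)\<^sup>2)"
        using pt h0 by (auto intro!: AE_I2)
    qed measurable
    have PhiS: "Phi M S m = enn2real ?PsiS" unfolding Phi_def using qf.Phi_eq[OF QS] .
    have "?PsiS \<le> ennreal (integral\<^sup>L M (\<lambda>p. h p * (S p)\<^sup>2))"
      using PsiS_le nn_integral_eq_integral[OF iS] h0 by simp
    then have "Phi M S m \<le> integral\<^sup>L M (\<lambda>p. h p * (S p)\<^sup>2)"
      unfolding PhiS using h0 by (intro enn2real_leI) (auto intro!: integral_nonneg_AE)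
    also have "\<dots> \<le> integral\<^sup>L M (\<lambda>p. h p * (R p + Y p)\<^sup>2)"
      using iS mk(1) pt by (intro integral_mono) auto
    also have "\<dots> \<le> (sqrt (Phi M R m) + sqrt (integral\<^sup>L M (\<lambda>p. h p * (Y p)\<^sup>2)))\<^sup>2"
      using mk(2) AR by simp
    finally have "Phi M S m \<le> (sqrt (Phi M R m) + sqrt (integral\<^sup>L M (\<lambda>p. h p * (S p - R p)\<^sup>2)))\<^sup>2"
      by (simp add: Y_def)
    then have "sqrt (Phi M S m) \<le> sqrt ((sqrt (Phi M R m) + sqrt (integral\<^sup>L M (\<lambda>p. h p * (S p - R p)\<^sup>2)))\<^sup>2)"
      by (rule real_sqrt_le_mono)
    also have "\<dots> = \<bar>sqrt (Phi M R m) + sqrt (integral\<^sup>L M (\<lambda>p. h p * (S p - R p)\<^sup>2))\<bar>"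
      by (rule real_sqrt_abs)
    also have "\<dots> \<le> sqrt (Phi M R m) + sqrt (integral\<^sup>L M (\<lambda>p. h p * (S p - R p)\<^sup>2))"
    proof -
      have "0 \<le> Phi M R m" using PhiR by simp
      moreover have "0 \<le> integral\<^sup>L M (\<lambda>p. h p * (S p - R p)\<^sup>2)" using h0 by (intro integral_nonneg_AE) auto
      ultimately show ?thesis by simp
    qed
    finally show "sqrt (Phi M S m) \<le> sqrt (Phi M R m) + sqrt (integral\<^sup>L M (\<lambda>p. h p * (S p - R p)\<^sup>2))" .
  qed
qed




lemma fst_borel[measurable]: "(fst :: ('a::euclidean_space \<times> 'a) \<Rightarrow> 'a) \<in> borel_measurable borel"
  by (intro borel_measurable_continuous_onI continuous_intros)

lemma snd_borel[measurable]: "(snd :: ('a::euclidean_space \<times> 'a) \<Rightarrow> 'a) \<in> borel_measurable borel"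
  by (intro borel_measurable_continuous_onI continuous_intros)

lemma is_prob_space: "is_prob_on M \<Longrightarrow> space M = UNIV"
  unfolding is_prob_on_def using sets_eq_imp_space_eq[of M borel] by simp

lemma supp_closed:
  assumes P: "is_prob_on (M :: 'a::euclidean_space measure)"
  shows "closed (supp M)"
proof -
  interpret prob_space M using P unfolding is_prob_on_def by blast
  have sM: "sets M = sets borel" using P unfolding is_prob_on_def by blast
  have "open (- supp M)"
  proof (rule openI)
    fix x assume "x \<in> - supp M"
    then obtain r where r: "0 < r" "\<not> measure M (ball x r) > 0" unfolding supp_def by auto
    have "ball x r \<subseteq> - supp M"
    proof
      fix z assume z: "z \<in> ball x r"
      have "ball z (r - dist x z) \<subseteq> ball x r"
        by (simp add: ball_subset_ball_iff dist_commute)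
      then have "measure M (ball z (r - dist x z)) \<le> measure M (ball x r)"
        by (intro finite_measure_mono) (auto simp: sM)
      then have "\<not> measure M (ball z (r - dist x z)) > 0" using r by auto
      moreover have "0 < r - dist x z" using z by simp
      ultimately show "z \<in> - supp M" unfolding supp_def
        by (simp only: Compl_iff mem_Collect_eq not_all) (intro exI[of _ "r - dist x z"], simp)
    qed
    then show "\<exists>e>0. ball x e \<subseteq> - supp M" using r by blast
  qed
  then show ?thesis by (simp add: closed_def)
qed


lemma compact_null:
  assumes P: "is_prob_on (M :: 'a::euclidean_space measure)" and K: "compact K" and D: "K \<inter> supp M = {}"
  shows "measure M K = 0"
proof -
  interpret prob_space M using P unfolding is_prob_on_def by blast
  have sM: "sets M = sets borel" using P unfolding is_prob_on_def by blast
  have "\<forall>z\<in>K. \<exists>r>0. measure M (ball z r) = 0"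
  proof
    fix z assume "z \<in> K"
    then have "z \<notin> supp M" using D by blast
    then obtain r where "0 < r" "\<not> measure M (ball z r) > 0" unfolding supp_def by auto
    then show "\<exists>r>0. measure M (ball z r) = 0" using measure_nonneg[of M "ball z r"] by auto
  qed
  then obtain rz where rz: "\<And>z. z \<in> K \<Longrightarrow> 0 < rz z \<and> measure M (ball z (rz z)) = 0" by metis
  have "K \<subseteq> (\<Union>z\<in>K. ball z (rz z))" using rz by auto
  then obtain C where C: "C \<subseteq> K" "finite C" "K \<subseteq> (\<Union>z\<in>C. ball z (rz z))"
    using compactE_image[OF K, of K "\<lambda>z. ball z (rz z)"] by auto
  have "measure M K \<le> measure M (\<Union>z\<in>C. ball z (rz z))"
    using C by (intro finite_measure_mono) (auto simp: sM)
  also have "\<dots> \<le> (\<Sum>z\<in>C. measure M (ball z (rz z)))"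
    using C by (intro finite_measure_subadditive_finite) (auto simp: sM)
  also have "\<dots> = 0" using C rz by (intro sum.neutral) auto
  finally show ?thesis using measure_nonneg[of M K] by linarith
qed

lemma distF_cball:
  assumes P: "is_prob_on (M :: 'a::euclidean_space measure)"
  shows "distF M (dist x) = (\<lambda>r. measure M (cball x r))"
  using is_prob_space[OF P] by (auto simp: distF_def cball_def)

lemma dtm_Phi:
  assumes P: "is_prob_on (M :: 'a::euclidean_space measure)"
  shows "dtm M m x = sqrt (Phi M (dist x) m / m)"
  unfolding dtm_def Phi_def distF_cball[OF P] delta_fun_def quant_def by simp

lemma qf_cball:
  assumes P: "is_prob_on (M :: 'a::euclidean_space measure)" and m: "0 < m" "m < 1"
  obtains r0 where "qf (distF M (dist x)) m r0"
proof -
  interpret prob_space M using P unfolding is_prob_on_def by blast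
  have sM: "sets M = sets borel" using P unfolding is_prob_on_def by blast
  have "dist x \<in> borel_measurable M" unfolding measurable_cong_sets[OF sM refl] by simp
  then show ?thesis using qf_distF[OF _ m] that by blast
qed

lemma exists_near:
  assumes P: "is_prob_on (M :: 'a::euclidean_space measure)" and m: "0 < m" "m < 1"
  shows "\<exists>x'\<in>supp M. dist x x' \<le> dtm M m x"
proof -
  obtain r0 where Q: "qf (distF M (dist x)) m r0" using qf_cball[OF P m] by blast
  interpret qf "distF M (dist x)" m r0 by (rule Q)
  have "measure M (cball x r0) > 0" using r0 mpos distF_cball[OF P] by simp
  then have "cball x r0 \<inter> supp M \<noteq> {}" using compact_null[OF P compact_cball] by force
  then have suppne: "supp M \<noteq> {}" by blast
  obtain x' where x': "x' \<in> supp M" "\<And>y. y \<in> supp M \<Longrightarrow> dist x x' \<le> dist x y"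
    using distance_attains_inf[OF supp_closed[OF P] suppne, of x] by blast
  have lb: "dist x x' \<le> quant (distF M (dist x)) t" if t: "t \<in> {0..m}" for t
    unfolding quant_def
  proof (rule cInf_greatest[OF ne])
    show "t \<le> m" using t by simp
  next
    fix r assume "r \<in> {r. 0 \<le> r \<and> t < distF M (dist x) r}"
    then have "measure M (cball x r) > 0" using t distF_cball[OF P] by auto
    then have "cball x r \<inter> supp M \<noteq> {}" using compact_null[OF P compact_cball] by force
    then obtain z where "z \<in> supp M" "dist x z \<le> r" by auto
    then show "dist x x' \<le> r" using x'(2)[of z] by simp
  qed
  have "integral {0..m} (\<lambda>t. (dist x x')\<^sup>2) \<le> integral {0..m} (\<lambda>t. (quant (distF M (dist x)) t)\<^sup>2)"
    using lb q_has_integral by (intro integral_le) (auto intro!: power_mono)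
  then have "m * (dist x x')\<^sup>2 \<le> Phi M (dist x) m" unfolding Phi_def using m by simp
  then have "(dist x x')\<^sup>2 \<le> Phi M (dist x) m / m" using m by (simp add: field_simps)
  then have "dist x x' \<le> sqrt (Phi M (dist x) m / m)" by (simp add: real_le_rsqrt)
  then show ?thesis using x'(1) dtm_Phi[OF P] by auto
qed


lemma dist_diff_sq_le: "(dist y p - dist x p)\<^sup>2 \<le> (dist x y)\<^sup>2"
proof -
  have "\<bar>dist y p - dist x p\<bar> \<le> dist x y"
    using dist_triangle[of y p x] dist_triangle[of x p y] by (auto simp: dist_commute abs_le_iff)
  then show ?thesis by (metis abs_ge_zero power2_abs power_mono)
qed

lemma sqrt_div_step:
  assumes "sqrt A \<le> sqrt B + sqrt C" "0 < (m::real)"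
  shows "sqrt (A / m) \<le> sqrt (B / m) + sqrt (C / m)"
proof -
  have "sqrt (A / m) = sqrt A / sqrt m" by (simp add: real_sqrt_divide)
  also have "\<dots> \<le> (sqrt B + sqrt C) / sqrt m" using assms by (simp add: divide_right_mono)
  also have "\<dots> = sqrt (B / m) + sqrt (C / m)" by (simp add: real_sqrt_divide add_divide_distrib)
  finally show ?thesis .
qed

lemma dtm_lipschitz:
  assumes P: "is_prob_on (M :: 'a::euclidean_space measure)" and m: "0 < m" "m < 1"
  shows "dtm M m y \<le> dtm M m x + dist x y"
proof -
  interpret prob_space M using P unfolding is_prob_on_def by blast
  have sM: "sets M = sets borel" using P unfolding is_prob_on_def by blast
  have dm: "dist z \<in> borel_measurable M" for z unfolding measurable_cong_sets[OF sM refl] by simp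
  obtain h where hm: "h \<in> borel_measurable M" and h0: "\<And>p. 0 \<le> h p" and h1: "\<And>p. h p \<le> 1"
    and hint: "integral\<^sup>L M h = m"
    and H: "\<And>S. S \<in> borel_measurable M \<Longrightarrow> (\<And>p. 0 \<le> S p) \<Longrightarrow> integrable M (\<lambda>p. (S p - dist x p)\<^sup>2) \<Longrightarrow>
       sqrt (Phi M S m) \<le> sqrt (Phi M (dist x) m) + sqrt (integral\<^sup>L M (\<lambda>p. h p * (S p - dist x p)\<^sup>2))"
    using core[OF dm[of x] _ m] by auto
  have iD: "integrable M (\<lambda>p. (dist y p - dist x p)\<^sup>2)"
  proof (rule integrable_const_bound[where B="(dist x y)\<^sup>2"])
    show "AE p in M. norm ((dist y p - dist x p)\<^sup>2) \<le> (dist x y)\<^sup>2"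
      using dist_diff_sq_le by (auto intro!: AE_I2)
    show "(\<lambda>p. (dist y p - dist x p)\<^sup>2) \<in> borel_measurable M" using dm by measurable
  qed
  have ih: "integrable M h"
    by (rule integrable_const_bound[where B=1, OF _ hm]) (use h0 h1 in \<open>auto intro!: AE_I2\<close>)
  have "integral\<^sup>L M (\<lambda>p. h p * (dist y p - dist x p)\<^sup>2) \<le> integral\<^sup>L M (\<lambda>p. h p * (dist x y)\<^sup>2)"
  proof (rule integral_mono)
    show "integrable M (\<lambda>p. h p * (dist y p - dist x p)\<^sup>2)"
    proof (rule Bochner_Integration.integrable_bound[OF iD])
      show "AE p in M. norm (h p * (dist y p - dist x p)\<^sup>2) \<le> norm ((dist y p - dist x p)\<^sup>2)"
        using h0 h1 by (auto intro!: AE_I2 simp: mult_left_le_one_le)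
      show "(\<lambda>p. h p * (dist y p - dist x p)\<^sup>2) \<in> borel_measurable M" using dm hm by measurable
    qed
    show "integrable M (\<lambda>p. h p * (dist x y)\<^sup>2)" using ih by simp
    show "h p * (dist y p - dist x p)\<^sup>2 \<le> h p * (dist x y)\<^sup>2" for p
      using dist_diff_sq_le h0 by (intro mult_left_mono) auto
  qed
  also have "\<dots> = m * (dist x y)\<^sup>2" using hint by simp
  finally have le: "integral\<^sup>L M (\<lambda>p. h p * (dist y p - dist x p)\<^sup>2) \<le> m * (dist x y)\<^sup>2" .
  have "sqrt (Phi M (dist y) m) \<le> sqrt (Phi M (dist x) m) + sqrt (integral\<^sup>L M (\<lambda>p. h p * (dist y p - dist x p)\<^sup>2))"
    by (rule H[OF dm[of y] _ iD]) simp
  also have "\<dots> \<le> sqrt (Phi M (dist x) m) + sqrt (m * (dist x y)\<^sup>2)"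
    using le by (intro add_left_mono real_sqrt_le_mono)
  finally have "sqrt (Phi M (dist y) m) \<le> sqrt (Phi M (dist x) m) + sqrt (m * (dist x y)\<^sup>2)" .
  then have "sqrt (Phi M (dist y) m / m) \<le> sqrt (Phi M (dist x) m / m) + sqrt (m * (dist x y)\<^sup>2 / m)"
    using m by (intro sqrt_div_step) auto
  moreover have "m * (dist x y)\<^sup>2 / m = (dist x y)\<^sup>2" using m by simp
  ultimately have "sqrt (Phi M (dist y) m / m) \<le> sqrt (Phi M (dist x) m / m) + dist x y" by simp
  then show ?thesis unfolding dtm_Phi[OF P] .
qed




lemma dtm_stab_gen:
  fixes \<pi> :: "('a::euclidean_space \<times> 'a) measure"
  assumes pr: "prob_space \<pi>" and s\<pi>: "sets \<pi> = sets borel"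
    and Pa: "is_prob_on \<alpha>" and Pb: "is_prob_on \<beta>"
    and fm: "f \<in> borel_measurable borel" and gm: "g \<in> borel_measurable borel"
    and fa: "distr \<pi> borel f = \<alpha>" and gb: "distr \<pi> borel g = \<beta>"
    and iC: "integrable \<pi> (\<lambda>p. (dist (f p) (g p))\<^sup>2)"
    and m: "0 < m" "m < 1"
  shows "dtm \<beta> m x \<le> dtm \<alpha> m x + sqrt (integral\<^sup>L \<pi> (\<lambda>p. (dist (f p) (g p))\<^sup>2) / m)"
proof -
  interpret prob_space \<pi> by (rule pr)
  have fm'[measurable]: "f \<in> borel_measurable \<pi>"
    unfolding measurable_cong_sets[OF s\<pi> refl] by (rule fm)
  have gm'[measurable]: "g \<in> borel_measurable \<pi>"
    unfolding measurable_cong_sets[OF s\<pi> refl] by (rule gm)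
  have sp: "space \<pi> = UNIV" using sets_eq_imp_space_eq[OF s\<pi>] by simp
  have Rm[measurable]: "(\<lambda>p. dist x (f p)) \<in> borel_measurable \<pi>" by measurable
  have Sm[measurable]: "(\<lambda>p. dist x (g p)) \<in> borel_measurable \<pi>" by measurable
  have dF: "distF \<pi> (\<lambda>p. dist x (k p)) = distF \<gamma> (dist x)"
    if km: "k \<in> borel_measurable borel" and kd: "distr \<pi> borel k = \<gamma>" and Pc: "is_prob_on \<gamma>" for k \<gamma>
  proof
    fix r
    have km': "k \<in> \<pi> \<rightarrow>\<^sub>M borel" unfolding measurable_cong_sets[OF s\<pi> refl] by (rule km)
    have "distF \<gamma> (dist x) r = measure (distr \<pi> borel k) (cball x r)"
      using distF_cball[OF Pc] kd by simp
    also have "\<dots> = measure \<pi> (k -` cball x r \<inter> space \<pi>)" by (rule measure_distr[OF km']) simp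
    also have "\<dots> = distF \<pi> (\<lambda>p. dist x (k p)) r" unfolding distF_def sp by (simp add: cball_def vimage_def)
    finally show "distF \<pi> (\<lambda>p. dist x (k p)) r = distF \<gamma> (dist x) r" by simp
  qed
  have PhiR: "Phi \<pi> (\<lambda>p. dist x (f p)) m = Phi \<alpha> (dist x) m" unfolding Phi_def dF[OF fm fa Pa] ..
  have PhiS: "Phi \<pi> (\<lambda>p. dist x (g p)) m = Phi \<beta> (dist x) m" unfolding Phi_def dF[OF gm gb Pb] ..
  have Rnn: "\<And>p. 0 \<le> dist x (f p)" by simp
  obtain h where hm: "h \<in> borel_measurable \<pi>" and h0: "\<And>p. 0 \<le> h p" and h1: "\<And>p. h p \<le> 1"
    and hint: "integral\<^sup>L \<pi> h = m" and H: "\<And>S. S \<in> borel_measurable \<pi> \<Longrightarrow> (\<And>p. 0 \<le> S p) \<Longrightarrow> integrable \<pi> (\<lambda>p. (S p - dist x (f p))\<^sup>2) \<Longrightarrow>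
       sqrt (Phi \<pi> S m) \<le> sqrt (Phi \<pi> (\<lambda>p. dist x (f p)) m) + sqrt (integral\<^sup>L \<pi> (\<lambda>p. h p * (S p - dist x (f p))\<^sup>2))"
    by (rule core[OF Rm Rnn m]) blast
  note [measurable] = hm
  have pt: "(dist x (g p) - dist x (f p))\<^sup>2 \<le> (dist (f p) (g p))\<^sup>2" for p
    using dist_diff_sq_le[of "g p" x "f p"] by (simp add: dist_commute)
  have iD: "integrable \<pi> (\<lambda>p. (dist x (g p) - dist x (f p))\<^sup>2)"
  proof (rule Bochner_Integration.integrable_bound[OF iC])
    show "AE p in \<pi>. norm ((dist x (g p) - dist x (f p))\<^sup>2) \<le> norm ((dist (f p) (g p))\<^sup>2)"
      using pt by (auto intro!: AE_I2)
    show "(\<lambda>p. (dist x (g p) - dist x (f p))\<^sup>2) \<in> borel_measurable \<pi>" by measurable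
  qed
  have "integral\<^sup>L \<pi> (\<lambda>p. h p * (dist x (g p) - dist x (f p))\<^sup>2) \<le> integral\<^sup>L \<pi> (\<lambda>p. (dist (f p) (g p))\<^sup>2)"
  proof (rule integral_mono[OF _ iC])
    show "integrable \<pi> (\<lambda>p. h p * (dist x (g p) - dist x (f p))\<^sup>2)"
    proof (rule Bochner_Integration.integrable_bound[OF iD])
      show "AE p in \<pi>. norm (h p * (dist x (g p) - dist x (f p))\<^sup>2) \<le> norm ((dist x (g p) - dist x (f p))\<^sup>2)"
        using h0 h1 by (auto intro!: AE_I2 simp: mult_left_le_one_le)
      show "(\<lambda>p. h p * (dist x (g p) - dist x (f p))\<^sup>2) \<in> borel_measurable \<pi>" using hm by measurable
    qed
    show "h p * (dist x (g p) - dist x (f p))\<^sup>2 \<le> (dist (f p) (g p))\<^sup>2" for p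
      using pt[of p] h0[of p] h1[of p] by (meson mult_left_le_one_le order_trans zero_le_power2)
  qed
  then have le: "sqrt (integral\<^sup>L \<pi> (\<lambda>p. h p * (dist x (g p) - dist x (f p))\<^sup>2)) \<le> sqrt (integral\<^sup>L \<pi> (\<lambda>p. (dist (f p) (g p))\<^sup>2))"
    by (rule real_sqrt_le_mono)
  have "sqrt (Phi \<pi> (\<lambda>p. dist x (g p)) m) \<le> sqrt (Phi \<pi> (\<lambda>p. dist x (f p)) m) + sqrt (integral\<^sup>L \<pi> (\<lambda>p. h p * (dist x (g p) - dist x (f p))\<^sup>2))"
    by (rule H[OF Sm _ iD]) simp
  then have "sqrt (Phi \<beta> (dist x) m) \<le> sqrt (Phi \<alpha> (dist x) m) + sqrt (integral\<^sup>L \<pi> (\<lambda>p. (dist (f p) (g p))\<^sup>2))"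
    using le unfolding PhiR PhiS by linarith
  then have "sqrt (Phi \<beta> (dist x) m / m) \<le> sqrt (Phi \<alpha> (dist x) m / m) + sqrt (integral\<^sup>L \<pi> (\<lambda>p. (dist (f p) (g p))\<^sup>2) / m)"
    using m by (intro sqrt_div_step) auto
  then show ?thesis by (simp add: dtm_Phi[OF Pa] dtm_Phi[OF Pb])
qed


lemma dtm_le_c:
  assumes P: "is_prob_on (\<mu> :: 'a::euclidean_space measure)" and m: "0 < m" "m < 1"
    and a: "0 < a" and d: "1 \<le> d" and x: "x \<in> supp \<mu>"
    and hyp: "\<forall>x\<in>supp \<mu>. \<forall>r. 0 < r \<and> r < (m / a) powr (1 / real d) \<longrightarrow> measure \<mu> (ball x r) \<ge> a * r ^ d"
  shows "dtm \<mu> m x \<le> (m / a) powr (1 / real d)"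
proof -
  interpret pr: prob_space \<mu> using P unfolding is_prob_on_def by blast
  have s\<mu>: "sets \<mu> = sets borel" using P unfolding is_prob_on_def by blast
  define c where "c = (m / a) powr (1 / real d)"
  have dpos: "0 < real d" using d by simp
  obtain r0 where Q: "qf (distF \<mu> (dist x)) m r0" using qf_cball[OF P m] by blast
  interpret qf "distF \<mu> (dist x)" m r0 by (rule Q)
  have qc: "quant (distF \<mu> (dist x)) t \<le> c" if t: "0 \<le> t" "t < m" for t
  proof -
    define r where "r = ((t + m) / (2 * a)) powr (1 / real d)"
    have pos: "0 < (t + m) / (2 * a)" using t a by simp
    have rpos: "0 < r" unfolding r_def using pos t m a by simp
    have "(t + m) / (2 * a) < m / a" using t a by (simp add: field_simps)
    then have rc: "r < c" unfolding r_def c_def using pos dpos by (intro powr_less_mono2) auto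
    have "r ^ d = r powr real d" using rpos by (simp add: powr_realpow)
    also have "\<dots> = (t + m) / (2 * a)" unfolding r_def powr_powr using dpos t a by simp
    finally have rd: "a * r ^ d = (t + m) / 2" using a by simp
    have "measure \<mu> (ball x r) \<ge> a * r ^ d" using hyp x rpos rc unfolding c_def by blast
    moreover have "measure \<mu> (ball x r) \<le> measure \<mu> (cball x r)"
      by (intro pr.finite_measure_mono) (auto simp: s\<mu>)
    ultimately have "t < distF \<mu> (dist x) r" using rd t distF_cball[OF P] by simp
    then have "quant (distF \<mu> (dist x)) t \<le> r"
      unfolding quant_def using rpos by (intro cInf_lower[OF _ bdd]) auto
    then show ?thesis using rc by simp
  qed
  have c0: "0 \<le> c" unfolding c_def by simp
  let ?q = "\<lambda>t. (quant (distF \<mu> (dist x)) t)\<^sup>2"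
  let ?g = "\<lambda>t. if t = m then 0 else ?q t"
  have iq: "?q integrable_on {0..m}" using q_has_integral by blast
  have "Phi \<mu> (dist x) m = integral {0..m} ?g"
    unfolding Phi_def by (rule integral_spike[of "{m}"]) auto
  also have "\<dots> \<le> integral {0..m} (\<lambda>t. c\<^sup>2)"
  proof (rule integral_le)
    show "?g integrable_on {0..m}" by (rule integrable_spike_finite[where S="{m}" and f="?q"]) (use iq in auto)
    show "(\<lambda>t. c\<^sup>2) integrable_on {0..m}" by (rule integrable_const_ivl)
    fix t assume t: "t \<in> {0..m}"
    show "?g t \<le> c\<^sup>2"
    proof (cases "t = m")
      case False
      then have "t < m" using t by simp
      then have "0 \<le> quant (distF \<mu> (dist x)) t" "quant (distF \<mu> (dist x)) t \<le> c"
        using q_nonneg qc t by auto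
      then show ?thesis using False by (simp add: power_mono)
    qed simp
  qed
  also have "\<dots> = m * c\<^sup>2" using m by simp
  finally have "Phi \<mu> (dist x) m / m \<le> c\<^sup>2" using m by (simp add: field_simps)
  then have "sqrt (Phi \<mu> (dist x) m / m) \<le> c" using c0 by (simp add: real_sqrt_le_iff real_le_lsqrt)
  then show ?thesis unfolding dtm_Phi[OF P] c_def .
qed




lemma W2_near:
  assumes fin: "W2_sq \<mu> \<nu> \<noteq> \<infinity>" and e: "0 < e"
  shows "\<exists>\<pi>\<in>couplings \<mu> \<nu>. (\<integral>\<^sup>+ p. ennreal ((dist (fst p) (snd p))\<^sup>2) \<partial>\<pi>) < ennreal ((W2 \<mu> \<nu>)\<^sup>2 + e)"
proof -
  have w2: "(W2 \<mu> \<nu>)\<^sup>2 = enn2real (W2_sq \<mu> \<nu>)" unfolding W2_def by simp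
  have "W2_sq \<mu> \<nu> = ennreal (enn2real (W2_sq \<mu> \<nu>))" using fin by (simp add: less_top)
  also have "\<dots> < ennreal ((W2 \<mu> \<nu>)\<^sup>2 + e)" unfolding w2 using e by (simp add: ennreal_lessI)
  finally have "W2_sq \<mu> \<nu> < ennreal ((W2 \<mu> \<nu>)\<^sup>2 + e)" .
  then show ?thesis unfolding W2_sq_def by (simp add: INF_less_iff)
qed

lemma dtm_stab:
  fixes \<mu> \<nu> :: "'a::euclidean_space measure"
  assumes P\<mu>: "is_prob_on \<mu>" and P\<nu>: "is_prob_on \<nu>" and fin: "W2_sq \<mu> \<nu> \<noteq> \<infinity>" and m: "0 < m" "m < 1"
  shows "dtm \<nu> m x \<le> dtm \<mu> m x + sqrt ((W2 \<mu> \<nu>)\<^sup>2 / m)"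
    and "dtm \<mu> m x \<le> dtm \<nu> m x + sqrt ((W2 \<mu> \<nu>)\<^sup>2 / m)"
proof -
  let ?w = "(W2 \<mu> \<nu>)\<^sup>2"
  have key: "dtm \<nu> m x \<le> dtm \<mu> m x + sqrt ((?w + e) / m) \<and> dtm \<mu> m x \<le> dtm \<nu> m x + sqrt ((?w + e) / m)"
    if e: "0 < e" for e
  proof -
    obtain \<pi> where \<pi>: "\<pi> \<in> couplings \<mu> \<nu>"
      and lt: "(\<integral>\<^sup>+ p. ennreal ((dist (fst p) (snd p))\<^sup>2) \<partial>\<pi>) < ennreal (?w + e)"
      using W2_near[OF fin e] by blast
    have pr: "prob_space \<pi>" and s\<pi>: "sets \<pi> = sets borel" and d1: "distr \<pi> borel fst = \<mu>"
      and d2: "distr \<pi> borel snd = \<nu>" using \<pi> unfolding couplings_def by auto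
    have cm: "(\<lambda>p. (dist (fst p) (snd p))\<^sup>2) \<in> borel_measurable \<pi>"
      unfolding measurable_cong_sets[OF s\<pi> refl] by measurable
    have iC: "integrable \<pi> (\<lambda>p. (dist (fst p) (snd p))\<^sup>2)"
    proof (rule integrableI_nn_integral_finite[OF cm])
      show "AE p in \<pi>. 0 \<le> (dist (fst p) (snd p))\<^sup>2" by simp
      show "(\<integral>\<^sup>+ p. ennreal ((dist (fst p) (snd p))\<^sup>2) \<partial>\<pi>) = ennreal (enn2real (\<integral>\<^sup>+ p. ennreal ((dist (fst p) (snd p))\<^sup>2) \<partial>\<pi>))"
      proof -
        have "(\<integral>\<^sup>+ p. ennreal ((dist (fst p) (snd p))\<^sup>2) \<partial>\<pi>) < \<top>"
          using lt ennreal_less_top order.strict_trans by blast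
        then show ?thesis by simp
      qed
    qed
    have "ennreal (integral\<^sup>L \<pi> (\<lambda>p. (dist (fst p) (snd p))\<^sup>2)) < ennreal (?w + e)"
      using lt nn_integral_eq_integral[OF iC] by simp
    then have Cle: "integral\<^sup>L \<pi> (\<lambda>p. (dist (fst p) (snd p))\<^sup>2) \<le> ?w + e"
      by (simp add: ennreal_less_iff)
    have iC': "integrable \<pi> (\<lambda>p. (dist (snd p) (fst p))\<^sup>2)" using iC by (simp add: dist_commute)
    have s1: "dtm \<nu> m x \<le> dtm \<mu> m x + sqrt (integral\<^sup>L \<pi> (\<lambda>p. (dist (fst p) (snd p))\<^sup>2) / m)"
      by (rule dtm_stab_gen[OF pr s\<pi> P\<mu> P\<nu> fst_borel snd_borel d1 d2 iC m])
    have s2: "dtm \<mu> m x \<le> dtm \<nu> m x + sqrt (integral\<^sup>L \<pi> (\<lambda>p. (dist (snd p) (fst p))\<^sup>2) / m)"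
      by (rule dtm_stab_gen[OF pr s\<pi> P\<nu> P\<mu> snd_borel fst_borel d2 d1 iC' m])
    have "sqrt (integral\<^sup>L \<pi> (\<lambda>p. (dist (fst p) (snd p))\<^sup>2) / m) \<le> sqrt ((?w + e) / m)"
      using Cle m by (intro real_sqrt_le_mono divide_right_mono) auto
    moreover have eqc: "integral\<^sup>L \<pi> (\<lambda>p. (dist (snd p) (fst p))\<^sup>2) = integral\<^sup>L \<pi> (\<lambda>p. (dist (fst p) (snd p))\<^sup>2)"
      by (simp add: dist_commute)
    ultimately show ?thesis using s1 s2[unfolded eqc] by linarith
  qed
  have lim: "A \<le> B + sqrt (?w / m)" if H: "\<And>e. 0 < e \<Longrightarrow> A \<le> B + sqrt ((?w + e) / m)" for A B
  proof (rule field_le_epsilon)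
    fix k :: real assume k: "0 < k"
    have "A \<le> B + sqrt ((?w + k\<^sup>2 * m) / m)" using H[of "k\<^sup>2 * m"] k m by simp
    also have "sqrt ((?w + k\<^sup>2 * m) / m) = sqrt (?w / m + k\<^sup>2)" using m by (simp add: add_divide_distrib)
    also have "\<dots> \<le> sqrt (?w / m) + sqrt (k\<^sup>2)" using m by (intro sqrt_add_le_add_sqrt) auto
    also have "sqrt (k\<^sup>2) = k" using k by simp
    finally show "A \<le> B + sqrt (?w / m) + k" by simp
  qed
  show "dtm \<nu> m x \<le> dtm \<mu> m x + sqrt (?w / m)" using key by (intro lim) blast
  show "dtm \<mu> m x \<le> dtm \<nu> m x + sqrt (?w / m)" using key by (intro lim) blast
qed


theorem corollary1p6:
  fixes \<mu> \<nu> :: "'a::euclidean_space measure"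
    and d :: nat and m a :: real
  assumes "d \<ge> 1" and "0 < m" and "m < 1" and "a > 0"
    and "is_prob_on \<mu>" and "is_prob_on \<nu>"
    and "bounded (supp \<mu>)"
    and "W2_sq \<mu> \<nu> \<noteq> \<infinity>" and "W2 \<mu> \<nu> \<le> 1/4"
    and "\<forall>x\<in>supp \<mu>. \<forall>r. 0 < r \<and> r < (m / a) powr (1 / real d)
            \<longrightarrow> measure \<mu> (ball x r) \<ge> a * r ^ d"
  shows "interleaving_dist (dtm_filtration \<mu> m) (dtm_filtration \<nu> m)
    \<le> ereal ((8 * diameter (supp \<mu>) + 5) * sqrt (W2 \<mu> \<nu> / m)
              + 2 * a powr (- 1 / real d) * m powr (1 / real d))"
proof -
  note d = assms(1) and m = assms(2,3) and a = assms(4) and P\<mu> = assms(5) and P\<nu> = assms(6)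
    and bd = assms(7) and fin = assms(8) and w14 = assms(9) and hyp = assms(10)
  define c where "c = (m / a) powr (1 / real d)"
  define s where "s = sqrt ((W2 \<mu> \<nu>)\<^sup>2 / m)"
  define \<epsilon> where "\<epsilon> = 2 * c + 3 * s"
  have c0: "0 \<le> c" unfolding c_def by simp
  have s0: "0 \<le> s" unfolding s_def using m by simp
  have st1: "dtm \<nu> m x \<le> dtm \<mu> m x + s" for x unfolding s_def by (rule dtm_stab(1)[OF P\<mu> P\<nu> fin m])
  have st2: "dtm \<mu> m x \<le> dtm \<nu> m x + s" for x unfolding s_def by (rule dtm_stab(2)[OF P\<mu> P\<nu> fin m])
  have dc: "dtm \<mu> m x \<le> c" if "x \<in> supp \<mu>" for x
    unfolding c_def by (rule dtm_le_c[OF P\<mu> m a d that hyp])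
  have il: "interleaved \<epsilon> (dtm_filtration \<mu> m) (dtm_filtration \<nu> m)"
    unfolding interleaved_def
  proof (intro allI impI conjI)
    fix t :: real
    show "dtm_filtration \<mu> m t \<subseteq> dtm_filtration \<nu> m (t + \<epsilon>)"
    proof
      fix y assume "y \<in> dtm_filtration \<mu> m t"
      then obtain x where x: "x \<in> supp \<mu>" "dist x y \<le> t - dtm \<mu> m x"
        unfolding dtm_filtration_def by auto
      obtain x' where x': "x' \<in> supp \<nu>" "dist x x' \<le> dtm \<nu> m x" using exists_near[OF P\<nu> m, of x] by blast
      have L: "dtm \<nu> m x' \<le> dtm \<nu> m x + dist x x'" by (rule dtm_lipschitz[OF P\<nu> m])
      have "dist x' y \<le> dist x' x + dist x y" by (rule dist_triangle)
      then have "dist x' y \<le> t + \<epsilon> - dtm \<nu> m x'"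
        using x x' L st1[of x] dc[OF x(1)] unfolding \<epsilon>_def by (simp add: dist_commute)
      then show "y \<in> dtm_filtration \<nu> m (t + \<epsilon>)"
        unfolding dtm_filtration_def using x'(1) by auto
    qed
    show "dtm_filtration \<nu> m t \<subseteq> dtm_filtration \<mu> m (t + \<epsilon>)"
    proof
      fix y assume "y \<in> dtm_filtration \<nu> m t"
      then obtain x where x: "x \<in> supp \<nu>" "dist x y \<le> t - dtm \<nu> m x"
        unfolding dtm_filtration_def by auto
      obtain x' where x': "x' \<in> supp \<mu>" "dist x x' \<le> dtm \<mu> m x" using exists_near[OF P\<mu> m, of x] by blast
      have "dist x' y \<le> dist x' x + dist x y" by (rule dist_triangle)
      then have "dist x' y \<le> t + \<epsilon> - dtm \<mu> m x'"
        using x x' st2[of x] dc[OF x'(1)] c0 s0 unfolding \<epsilon>_def by (simp add: dist_commute)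
      then show "y \<in> dtm_filtration \<mu> m (t + \<epsilon>)"
        unfolding dtm_filtration_def using x'(1) by auto
    qed
  qed
  have e0: "0 \<le> \<epsilon>" unfolding \<epsilon>_def using c0 s0 by simp
  have "interleaving_dist (dtm_filtration \<mu> m) (dtm_filtration \<nu> m) \<le> ereal \<epsilon>"
    unfolding interleaving_dist_def using il e0 by (intro Inf_lower) blast
  also have "\<epsilon> \<le> (8 * diameter (supp \<mu>) + 5) * sqrt (W2 \<mu> \<nu> / m)
              + 2 * a powr (- 1 / real d) * m powr (1 / real d)"
  proof -
    have w0: "0 \<le> W2 \<mu> \<nu>" unfolding W2_def by simp
    have "(W2 \<mu> \<nu>)\<^sup>2 \<le> W2 \<mu> \<nu>" using w0 w14 by (simp add: power2_eq_square mult_le_cancel_right1 mult_left_le_one_le)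
    then have "s \<le> sqrt (W2 \<mu> \<nu> / m)" unfolding s_def using m by (intro real_sqrt_le_mono divide_right_mono) auto
    moreover have "0 \<le> diameter (supp \<mu>)" by (rule diameter_ge_0[OF bd])
    moreover have "0 \<le> sqrt (W2 \<mu> \<nu> / m)" using w0 m by simp
    ultimately have "3 * s \<le> (8 * diameter (supp \<mu>) + 5) * sqrt (W2 \<mu> \<nu> / m)"
    proof -
      assume h: "s \<le> sqrt (W2 \<mu> \<nu> / m)" "0 \<le> diameter (supp \<mu>)" "0 \<le> sqrt (W2 \<mu> \<nu> / m)"
      have "0 \<le> 8 * diameter (supp \<mu>) * sqrt (W2 \<mu> \<nu> / m)" using h by simp
      moreover have "(8 * diameter (supp \<mu>) + 5) * sqrt (W2 \<mu> \<nu> / m)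
        = 8 * diameter (supp \<mu>) * sqrt (W2 \<mu> \<nu> / m) + 5 * sqrt (W2 \<mu> \<nu> / m)" by (simp add: algebra_simps)
      ultimately show ?thesis using h by linarith
    qed
    moreover have "c = a powr (- 1 / real d) * m powr (1 / real d)"
      unfolding c_def using a m by (simp add: powr_divide powr_minus_divide)
    ultimately show ?thesis unfolding \<epsilon>_def by simp
  qed
  finally show ?thesis by simp
qed



end
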